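(* Let $k$ be a field and $A\in\operatorname{Mat}_{n\times n}(k)$ with index $i(A)=r\ge 1$. For $i\in\{1,\dots,r\}$ put $\nu_i(A)=n-\operatorname{rk}(A^i)$. Let $A\{GD\}$ be the set of G-Drazin inverses of $A$. Then there exists a bijection $$k^{\nu_1(A)\cdot\nu_r(A)}\times k^{\nu_r(A)-\nu_1(A)}\times k^{[\nu_1(A)-1][\nu_r(A)-\nu_1(A)]}\;\longrightarrow\;A\{GD\}.$$
   Context: The index $i(A)$ of a square matrix $A$ is the smallest integer $r\ge 0$ such that $\operatorname{rk}(A^{r})=\operatorname{rk}(A^{r+1})$. A matrix $X\in\operatorname{Mat}_{n\times n}(k)$ is a G-Drazin inverse of $A$ (with $r=i(A)$) if $AXA=A$ and $XA^{r}=A^{r}X$. *)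

theory Defs
  imports "HOL-Analysis.Analysis"
begin

text \<open>Powers of square matrices: A^0 = I, A^(m+1) = A * A^m.\<close>
primrec matpow :: "'a::field^'n^'n \<Rightarrow> nat \<Rightarrow> 'a^'n^'n" where
  "matpow A 0 = mat 1"
| "matpow A (Suc m) = A ** matpow A m"

text \<open>Index i(A): the least r \<ge> 0 with rk(A^r) = rk(A^(r+1)).\<close>
definition mat_index :: "'a::field^'n^'n \<Rightarrow> nat" where
  "mat_index A = (LEAST r. rank (matpow A r) = rank (matpow A (Suc r)))"

text \<open>nu_i(A) = n - rk(A^i), with n = CARD('n).\<close>
definition nu :: "nat \<Rightarrow> 'a::field^'n^'n \<Rightarrow> nat" where
  "nu i A = CARD('n) - rank (matpow A i)"

text \<open>The set A{GD} of G-Drazin inverses of A.\<close>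
definition GD_inverses :: "'a::field^'n^'n \<Rightarrow> ('a^'n^'n) set" where
  "GD_inverses A = {X. A ** X ** A = A \<and>
      X ** matpow A (mat_index A) = matpow A (mat_index A) ** X}"

text \<open>k^m, represented as lists of length m.\<close>
definition kpow :: "nat \<Rightarrow> 'a list set" where
  "kpow m = {xs. length xs = m}"

end

theory Submission
  imports Defs
begin
lemma matpow_Suc': "matpow A (Suc m) = matpow A m ** A"
  by (induction m) (simp_all add: matrix_mul_assoc)

lemma matpow_add: "matpow A (m + k) = matpow A m ** matpow A k"
  by (induction m) (simp_all add: matrix_mul_assoc)

lemma matpow_comm: "A ** matpow A m = matpow A m ** A"
  by (metis matpow.simps(2) matpow_Suc')

lemma transpose_matpow: "transpose (matpow A m) = matpow (transpose A) m"
  by (induction m) (simp_all add: matrix_transpose_mul matpow_comm)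

lemma range_mv_span_columns:
  fixes N :: "'a::field^'n^'m"
  shows "vec.span (range ((*v) N)) = vec.span (columns N)"
unfolding vec.span_eq proof (rule conjI)
  show "range ((*v) N) \<subseteq> vec.span (columns N)"
    using matrix_vector_mult_in_columnspace_gen by blast
  show "columns N \<subseteq> vec.span (range ((*v) N))"
  proof
    fix c assume "c \<in> columns N"
    then obtain i where "c = column i N" by (auto simp: columns_def)
    then have "c = N *v axis i 1"
      by (simp add: column_def matrix_vector_mult_def axis_def vec_eq_iff if_distrib cong: if_cong)
    then show "c \<in> vec.span (range ((*v) N))" by (simp add: vec.span_base)
  qed
qed

lemma rank_cr:
  fixes M :: "'a::field^'n^'m"
  shows "rank M = vec.dim (range ((*v) (transpose M)))"
proof -
  have "rank M = vec.dim (columns (transpose M))" by (simp add: row_rank_def_gen)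
  also have "\<dots> = vec.dim (range ((*v) (transpose M)))"
    by (metis range_mv_span_columns vec.dim_span)
  finally show ?thesis .
qed

lemma rank_nullity:
  fixes M :: "'a::field^'n^'m"
  assumes S: "vec.subspace S"
  shows "vec.dim S = vec.dim ((*v) M ` S) + vec.dim {v\<in>S. M *v v = 0}"
proof -
  define Z where "Z = {v\<in>S. M *v v = 0}"
  have Zsub: "vec.subspace Z"
    unfolding Z_def using vec.subspace_inter[OF S vec.subspace_kernel[of M]]
    by (simp add: Int_def)
  obtain B0 where B0: "B0 \<subseteq> Z" "vec.independent B0" "Z \<subseteq> vec.span B0"
    using vec.maximal_independent_subset by blast
  have "B0 \<subseteq> S" using B0 by (auto simp: Z_def)
  then obtain B1 where B1: "B0 \<subseteq> B1" "B1 \<subseteq> S" "vec.independent B1" "S \<subseteq> vec.span B1"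
    using vec.maximal_independent_subset_extend B0(2) by metis
  define C where "C = B1 - B0"
  have fB1: "finite B1" using B1 vec.finiteI_independent by blast
  have cB1: "card B1 = vec.dim S" using B1 vec.basis_card_eq_dim by blast
  have cB0: "card B0 = vec.dim Z" using B0 vec.basis_card_eq_dim by blast
  have indC: "vec.independent C" using B1 C_def vec.independent_mono by blast
  have cC: "card B1 = card B0 + card C"
    using fB1 B1(1) unfolding C_def
    by (metis card_Diff_subset finite_subset le_add_diff_inverse card_mono)
  have spB1: "vec.span B1 \<subseteq> S" using B1 S by (simp add: vec.span_minimal)
  have int0: "vec.span B0 \<inter> vec.span C \<subseteq> {0}"
  proof -
    have "vec.dim {x + y |x y. x \<in> vec.span B0 \<and> y \<in> vec.span C} + vec.dim (vec.span B0 \<inter> vec.span C)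
        = vec.dim (vec.span B0) + vec.dim (vec.span C)"
      by (rule vec.dim_sums_Int) auto
    moreover have "vec.dim (vec.span B0) = card B0"
      using B0 vec.dim_span_eq_card_independent by blast
    moreover have "vec.dim (vec.span C) = card C"
      using indC vec.dim_span_eq_card_independent by blast
    moreover have "card B1 \<le> vec.dim {x + y |x y. x \<in> vec.span B0 \<and> y \<in> vec.span C}"
    proof (rule vec.independent_card_le_dim[OF _ B1(3)])
      show "B1 \<subseteq> {x + y |x y. x \<in> vec.span B0 \<and> y \<in> vec.span C}"
      proof
        fix b assume b: "b \<in> B1"
        show "b \<in> {x + y |x y. x \<in> vec.span B0 \<and> y \<in> vec.span C}"
        proof (cases "b \<in> B0")
          case True
          then have "b \<in> vec.span B0" "(0::'a^'n) \<in> vec.span C" by (auto intro: vec.span_base vec.span_zero)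
          then have "b + 0 \<in> {x + y |x y. x \<in> vec.span B0 \<and> y \<in> vec.span C}" by blast
          then show ?thesis by simp
        next
          case False
          then have "b \<in> C" using b C_def by blast
          then have "b \<in> vec.span C" "(0::'a^'n) \<in> vec.span B0" by (auto intro: vec.span_base vec.span_zero)
          then have "0 + b \<in> {x + y |x y. x \<in> vec.span B0 \<and> y \<in> vec.span C}" by blast
          then show ?thesis by simp
        qed
      qed
    qed
    ultimately have "vec.dim (vec.span B0 \<inter> vec.span C) = 0" using cC by linarith
    then show ?thesis using vec.dim_eq_0[of "vec.span B0 \<inter> vec.span C"] by simp
  qed
  have inj: "inj_on ((*v) M) (vec.span C)"
  proof (rule inj_onI)
    fix x y assume xy: "x \<in> vec.span C" "y \<in> vec.span C" "M *v x = M *v y"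
    have z1: "x - y \<in> vec.span C" using xy vec.span_diff by blast
    have "vec.span C \<subseteq> vec.span B1" using C_def by (simp add: vec.span_mono Diff_subset)
    then have "x - y \<in> S" using z1 spB1 by blast
    moreover have "M *v (x - y) = 0" using xy by (simp add: matrix_vector_mult_diff_distrib)
    ultimately have "x - y \<in> Z" by (simp add: Z_def)
    then have "x - y \<in> vec.span B0" using B0 by blast
    then have "x - y = 0" using z1 int0 by blast
    then show "x = y" by simp
  qed
  have dimC: "vec.dim ((*v) M ` C) = card C"
    using vec.dim_image_eq[OF _ inj] indC vec.dim_eq_card_independent by simp
  have "vec.dim ((*v) M ` S) = vec.dim ((*v) M ` C)"
  proof (rule antisym)
    have "(*v) M ` B1 \<subseteq> vec.span ((*v) M ` C)"
    proof
      fix w assume "w \<in> (*v) M ` B1"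
      then obtain b where b: "b \<in> B1" "w = M *v b" by blast
      show "w \<in> vec.span ((*v) M ` C)"
      proof (cases "b \<in> B0")
        case True
        then have "w = 0" using b B0 by (auto simp: Z_def)
        then show ?thesis by (simp add: vec.span_zero)
      next
        case False
        then show ?thesis using b C_def by (auto intro: vec.span_base)
      qed
    qed
    then have "vec.span ((*v) M ` B1) \<subseteq> vec.span ((*v) M ` C)"
      by (simp add: vec.span_minimal)
    moreover have "(*v) M ` S \<subseteq> vec.span ((*v) M ` B1)"
      using B1(4) vec.span_image by blast
    ultimately show "vec.dim ((*v) M ` S) \<le> vec.dim ((*v) M ` C)"
      by (meson order_trans vec.dim_mono)
    show "vec.dim ((*v) M ` C) \<le> vec.dim ((*v) M ` S)"
      using B1(2) C_def by (intro vec.dim_subset) auto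
  qed
  moreover have "vec.dim {v\<in>S. M *v v = 0} = card B0" using cB0 unfolding Z_def by simp
  ultimately show ?thesis using dimC cC cB1 by linarith
qed

lemma subspace_range_mv: "vec.subspace (range ((*v) (M::'a::field^'n^'m)))"
  using vec.subspace_image[OF vec.subspace_UNIV] by blast


locale fit =
  fixes B :: "'a::field^'n^'n" and r :: nat
  assumes r1: "r \<ge> 1"
    and req: "vec.dim (range ((*v) (matpow B r))) = vec.dim (range ((*v) (matpow B (Suc r))))"
begin

abbreviation "T \<equiv> matpow B r"
definition "R = range ((*v) T)"
definition "K = {v. T *v v = 0}"
definition "N = {v. B *v v = 0}"

lemma subR: "vec.subspace R" unfolding R_def by (rule subspace_range_mv)
lemma subK: "vec.subspace K" unfolding K_def by (rule vec.subspace_kernel)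
lemma subN: "vec.subspace N" unfolding N_def by (rule vec.subspace_kernel)

lemma BR: "(*v) B ` R = R"
proof -
  have eq: "(*v) B ` R = range ((*v) (matpow B (Suc r)))"
    unfolding R_def by (auto simp: image_comp o_def matrix_vector_mul_assoc)
  have sub: "range ((*v) (matpow B (Suc r))) \<subseteq> R"
    unfolding R_def matpow_Suc' by (auto simp: matrix_vector_mul_assoc[symmetric])
  have "range ((*v) (matpow B (Suc r))) = R"
    using vec.subspace_dim_equal[OF subspace_range_mv subR sub] req R_def by simp
  then show ?thesis using eq by simp
qed

lemma BpowR: "(*v) (matpow B m) ` R = R"
proof (induction m)
  case 0
  then show ?case by simp
next
  case (Suc m)
  have "(*v) (matpow B (Suc m)) ` R = (*v) B ` ((*v) (matpow B m) ` R)"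
    by (auto simp: image_comp o_def matrix_vector_mul_assoc)
  then show ?case using Suc BR by simp
qed

lemma RK0: "R \<inter> K \<subseteq> {0}"
proof -
  have "vec.dim R = vec.dim ((*v) T ` R) + vec.dim {v\<in>R. T *v v = 0}"
    by (rule rank_nullity[OF subR])
  then have "vec.dim {v\<in>R. T *v v = 0} = 0" using BpowR by simp
  then have "{v\<in>R. T *v v = 0} \<subseteq> {0}" using vec.dim_eq_0[of "{v\<in>R. T *v v = 0}"] by simp
  then show ?thesis unfolding K_def by blast
qed

lemma dimRK: "vec.dim R + vec.dim K = CARD('n)"
proof -
  have "vec.dim (UNIV::('a^'n) set) = vec.dim ((*v) T ` UNIV) + vec.dim {v\<in>UNIV. T *v v = 0}"
    by (rule rank_nullity[OF vec.subspace_UNIV])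
  then show ?thesis unfolding R_def K_def by (simp add: vec_dim_card card_cart_basis)
qed

lemma BK: "(*v) B ` K \<subseteq> K"
proof
  fix w assume "w \<in> (*v) B ` K"
  then obtain v where v: "T *v v = 0" "w = B *v v" unfolding K_def by blast
  have "T *v w = (T ** B) *v v" using v by (simp add: matrix_vector_mul_assoc)
  also have "\<dots> = B *v (T *v v)" by (simp add: matpow_comm[symmetric] matrix_vector_mul_assoc)
  finally show "w \<in> K" using v by (simp add: K_def)
qed

lemma NK: "N \<subseteq> K"
proof -
  obtain s where s: "r = Suc s" using r1 by (cases r) auto
  have Ts: "T = matpow B s ** B" using s matpow_Suc' by simp
  show ?thesis
  proof
    fix x assume "x \<in> N"
    then have "B *v x = 0" by (simp add: N_def)
    then have "T *v x = 0" unfolding Ts by (simp add: matrix_vector_mul_assoc[symmetric])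
    then show "x \<in> K" by (simp add: K_def)
  qed
qed

lemma dimBK: "vec.dim ((*v) B ` K) + vec.dim N = vec.dim K"
proof -
  have "vec.dim K = vec.dim ((*v) B ` K) + vec.dim {v\<in>K. B *v v = 0}"
    by (rule rank_nullity[OF subK])
  moreover have "{v\<in>K. B *v v = 0} = N" using NK N_def by auto
  ultimately show ?thesis by simp
qed

lemma injR: "x \<in> R \<Longrightarrow> y \<in> R \<Longrightarrow> B *v x = B *v y \<Longrightarrow> x = y"
proof -
  assume xy: "x \<in> R" "y \<in> R" "B *v x = B *v y"
  have "x - y \<in> R" using xy subR vec.subspace_diff by blast
  moreover have "x - y \<in> N" using xy by (simp add: N_def matrix_vector_mult_diff_distrib)
  ultimately have "x - y = 0" using NK RK0 by blast
  then show "x = y" by simp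
qed

lemma RplusK: "\<exists>a k. a \<in> R \<and> k \<in> K \<and> v = a + k"
proof -
  let ?S = "{x + y |x y. x \<in> R \<and> y \<in> K}"
  have "vec.dim ?S + vec.dim (R \<inter> K) = vec.dim R + vec.dim K"
    by (rule vec.dim_sums_Int[OF subR subK])
  moreover have "vec.dim (R \<inter> K) = 0" using RK0 vec.dim_eq_0[of "R \<inter> K"] by simp
  ultimately have "vec.dim ?S = CARD('n)" using dimRK by simp
  then have "vec.span ?S = UNIV"
    using vec.dim_eq_full[of ?S] by (simp add: vec.dimension_def card_cart_basis)
  moreover have "vec.subspace ?S" by (rule vec.subspace_sums[OF subR subK])
  ultimately have "?S = UNIV" using vec.span_eq_iff[of ?S] by simp
  then have "v \<in> ?S" by simp
  then show ?thesis by blast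
qed

end

definition colmat :: "('n::finite \<Rightarrow> 'a::field^'m) \<Rightarrow> 'a^'n^'m" where
  "colmat p = (\<chi> i j. p j $ i)"

lemma colmat_mv: "colmat p *v x = (\<Sum>j\<in>UNIV. x$j *s p j)"
  by (simp add: colmat_def vec_eq_iff matrix_vector_mult_def mult.commute)

lemma colmat_axis: "colmat p *v axis j 1 = p j"
proof -
  have "colmat p *v axis j 1 = (\<Sum>k\<in>UNIV. (axis j 1::'a^_)$k *s p k)" by (rule colmat_mv)
  also have "\<dots> = (\<Sum>k\<in>{j}. (axis j 1::'a^_)$k *s p k)"
    by (rule sum.mono_neutral_right) (auto simp: axis_def)
  finally show ?thesis by (simp add: axis_def)
qed

lemma entry_mv: "(M::'a::field^'n^'m) $ i $ j = (M *v axis j 1) $ i"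
proof -
  have "(M *v axis j 1) $ i = (\<Sum>k\<in>UNIV. M$i$k * (axis j 1::'a^'n)$k)"
    by (simp add: matrix_vector_mult_def)
  also have "\<dots> = (\<Sum>k\<in>{j}. M$i$k * (axis j 1::'a^'n)$k)"
    by (rule sum.mono_neutral_right) (auto simp: axis_def)
  finally show ?thesis by (simp add: axis_def)
qed

lemma colmat_inv:
  fixes p :: "'n::finite \<Rightarrow> 'a::field^'n"
  assumes inj: "inj p" and ind: "vec.independent (range p)"
  shows "\<exists>Pinv. Pinv ** colmat p = mat 1 \<and> colmat p ** Pinv = mat 1"
proof -
  have "inj ((*v) (colmat p))"
    unfolding vec.inj_iff_eq_0
  proof (intro allI impI)
    fix x :: "'a^'n" assume x0: "colmat p *v x = 0"
    define c where "c v = x $ (inv p v)" for v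
    have "(\<Sum>v\<in>range p. c v *s v) = (\<Sum>j\<in>UNIV. c (p j) *s p j)"
      using inj by (simp add: sum.reindex)
    also have "\<dots> = (\<Sum>j\<in>UNIV. x$j *s p j)" using inj by (simp add: c_def)
    also have "\<dots> = 0" using x0 by (simp add: colmat_mv)
    finally have "\<forall>v\<in>range p. c v = 0" using ind vec.independent_explicit by blast
    then have "\<forall>j. x $ j = 0" using inj by (simp add: c_def)
    then show "x = 0" by (simp add: vec_eq_iff)
  qed
  then obtain Pinv where "Pinv ** colmat p = mat 1" using matrix_left_invertible_injective by blast
  then show ?thesis using matrix_left_right_inverse by blast
qed

lemma colmat_span:
  fixes p :: "'n::finite \<Rightarrow> 'a::field^'n"
  assumes PiP: "Pinv ** colmat p = mat 1" and PPi: "colmat p ** Pinv = mat 1"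
  shows "w \<in> vec.span (p ` I) \<longleftrightarrow> (\<forall>j. j \<notin> I \<longrightarrow> (Pinv *v w) $ j = 0)"
proof
  assume w: "w \<in> vec.span (p ` I)"
  let ?V = "{w. \<forall>j. j \<notin> I \<longrightarrow> (Pinv *v w) $ j = 0}"
  have "vec.subspace ?V"
    unfolding vec.subspace_def by (simp add: matrix_vector_right_distrib vector_scalar_commute
      matrix_vector_mult_0_right)
  moreover have "p ` I \<subseteq> ?V"
  proof clarify
    fix i j assume "i \<in> I" "j \<notin> I"
    have "Pinv *v p i = (Pinv ** colmat p) *v axis i 1"
      by (simp add: colmat_axis matrix_vector_mul_assoc[symmetric])
    also have "\<dots> = axis i 1" using PiP by simp
    finally show "(Pinv *v p i) $ j = 0" using \<open>i \<in> I\<close> \<open>j \<notin> I\<close> by (auto simp: axis_def)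
  qed
  ultimately have "vec.span (p ` I) \<subseteq> ?V" by (rule vec.span_minimal[rotated])
  then show "\<forall>j. j \<notin> I \<longrightarrow> (Pinv *v w) $ j = 0" using w by blast
next
  assume h: "\<forall>j. j \<notin> I \<longrightarrow> (Pinv *v w) $ j = 0"
  have "w = colmat p *v (Pinv *v w)" using PPi by (simp add: matrix_vector_mul_assoc)
  also have "\<dots> = (\<Sum>j\<in>UNIV. (Pinv *v w)$j *s p j)" by (rule colmat_mv)
  also have "\<dots> = (\<Sum>j\<in>I. (Pinv *v w)$j *s p j)"
    using h by (intro sum.mono_neutral_right) auto
  also have "\<dots> \<in> vec.span (p ` I)"
    by (intro vec.span_sum vec.span_scale vec.span_base) auto
  finally show "w \<in> vec.span (p ` I)" .
qed

lemma mat0_iff: "(M::'a::field^'n^'m) = 0 \<longleftrightarrow> (\<forall>v. M *v v = 0)"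
  by (simp add: matrix_eq)

lemma mm_diff_l: "(A::'a::field^'n^'m) ** (X - Y) = A ** X - A ** Y"
  by (simp add: matrix_matrix_mult_def vec_eq_iff sum_subtractf ring_distribs)
lemma mm_diff_r: "((X::'a::field^'n^'m) - Y) ** A = X ** A - Y ** A"
  by (simp add: matrix_matrix_mult_def vec_eq_iff sum_subtractf ring_distribs)
lemma mm_add_r: "((X::'a::field^'n^'m) + Y) ** A = X ** A + Y ** A"
  by (simp add: matrix_matrix_mult_def vec_eq_iff sum.distrib ring_distribs)

context fit begin

definition "H = {Y. B ** Y ** B = 0 \<and> Y ** T = 0 \<and> T ** Y = 0}"
definition "GDB = {X. B ** X ** B = B \<and> X ** T = T ** X}"

lemma commute_kill:
  assumes 1: "B ** Y ** B = 0" and 2: "Y ** T = T ** Y"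
  shows "Y ** T = 0"
proof -
  have a: "Y *v (T *v v) = 0" if v: "v \<in> R" for v
  proof -
    obtain u where u: "u \<in> R" "v = B *v u" using v BR by (metis imageE)
    have "B *v (Y *v v) = (B ** Y ** B) *v u" using u by (simp add: matrix_vector_mul_assoc matrix_mul_assoc)
    then have "Y *v v \<in> N" using 1 by (simp add: N_def)
    then have "T *v (Y *v v) = 0" using NK by (auto simp: K_def)
    moreover have "T *v (Y *v v) = Y *v (T *v v)"
      by (simp add: matrix_vector_mul_assoc 2)
    ultimately show ?thesis by simp
  qed
  have "(Y ** T) *v w = 0" for w
  proof -
    have "T *v w \<in> (*v) T ` R" using BpowR by (simp add: R_def)
    then obtain v where "v \<in> R" "T *v w = T *v v" by blast
    then show ?thesis using a by (simp add: matrix_vector_mul_assoc[symmetric])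
  qed
  then show ?thesis by (simp add: mat0_iff)
qed

lemma GD_shift:
  assumes X0: "X0 \<in> GDB"
  shows "X \<in> GDB \<longleftrightarrow> X - X0 \<in> H"
proof
  assume X: "X \<in> GDB"
  define Y where "Y = X - X0"
  have 1: "B ** Y ** B = 0" using X X0 by (simp add: GDB_def Y_def mm_diff_l mm_diff_r)
  have 2: "Y ** T = T ** Y" using X X0 by (simp add: GDB_def Y_def mm_diff_l mm_diff_r)
  have 3: "Y ** T = 0" by (rule commute_kill[OF 1 2])
  show "X - X0 \<in> H" using 1 2 3 by (simp add: H_def Y_def[symmetric])
next
  assume Y: "X - X0 \<in> H"
  have a: "B ** X ** B - B ** X0 ** B = 0" "X ** T - X0 ** T = 0" "T ** X - T ** X0 = 0"
    using Y by (simp_all add: H_def mm_diff_l mm_diff_r)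
  then show "X \<in> GDB" using X0 by (simp add: GDB_def)
qed

end

locale fitb = fit B r for B :: "'a::field^'n^'n" and r +
  fixes p q :: "'n \<Rightarrow> 'a^'n" and BR BAK BC BN BK :: "('a^'n) set"
  assumes p_bij: "bij_betw p UNIV (BR \<union> BAK \<union> BC)"
    and indP: "vec.independent (BR \<union> BAK \<union> BC)"
    and dis1: "BR \<inter> BAK = {}" and dis2: "BR \<inter> BC = {}" and dis3: "BAK \<inter> BC = {}"
    and BR_R: "BR \<subseteq> R" and R_BR: "R \<subseteq> vec.span BR"
    and BAK_K: "BAK \<subseteq> (*v) B ` K" and K_BAK: "(*v) B ` K \<subseteq> vec.span BAK"
    and BC_K: "BC \<subseteq> K"
    and cardBAK: "card BAK = vec.dim ((*v) B ` K)" and cardBC: "card BAK + card BC = vec.dim K"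
    and q_inj: "inj q" and indQ: "vec.independent (range q)"
    and BN_q: "BN \<subseteq> range q" and BK_q: "BK \<subseteq> range q"
    and BN_N: "BN \<subseteq> N" and N_BN: "N \<subseteq> vec.span BN"
    and BK_K: "BK \<subseteq> K" and K_BK: "K \<subseteq> vec.span BK"
    and cardBN: "card BN = vec.dim N" and cardBK: "card BK = vec.dim K"
begin

lemma p_inj: "inj p" using p_bij by (simp add: bij_betw_def)
lemma p_range: "range p = BR \<union> BAK \<union> BC" using p_bij by (simp add: bij_betw_def)
lemma indp: "vec.independent (range p)" using indP p_range by simp

lemma span_p: "vec.span (range p) = UNIV"
proof -
  have "card (range p) = CARD('n)" using p_inj by (simp add: card_image)
  moreover have "finite (range p)" by simp
  ultimately have "UNIV \<subseteq> vec.span (range p)"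
    using vec.card_eq_dim[of "range p" UNIV] indp by (simp add: vec_dim_card card_cart_basis)
  then show ?thesis by blast
qed

definition "Pinv = (SOME M. M ** colmat p = mat 1 \<and> colmat p ** M = mat 1)"
definition "Qinv = (SOME M. M ** colmat q = mat 1 \<and> colmat q ** M = mat 1)"

lemma Pinv: "Pinv ** colmat p = mat 1" "colmat p ** Pinv = mat 1"
  using someI_ex[OF colmat_inv[OF p_inj indp]] unfolding Pinv_def by blast+
lemma Qinv: "Qinv ** colmat q = mat 1" "colmat q ** Qinv = mat 1"
  using someI_ex[OF colmat_inv[OF q_inj indQ]] unfolding Qinv_def by blast+

lemma spanBR: "vec.span BR = R" using vec.span_subspace[OF BR_R R_BR subR] .
lemma spanBN: "vec.span BN = N" using vec.span_subspace[OF BN_N N_BN subN] .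
lemma spanBK: "vec.span BK = K" using vec.span_subspace[OF BK_K K_BK subK] .

lemma BAK_KK: "BAK \<subseteq> K" using BAK_K BK by blast

lemma pj_cases: "p j \<in> BR \<or> p j \<in> BAK \<or> p j \<in> BC" using p_range by blast

lemma imB: "B *v v \<in> vec.span (BR \<union> BAK)"
proof -
  obtain a k where ak: "a \<in> R" "k \<in> K" "v = a + k" using RplusK by blast
  have "B *v a \<in> R" using ak BR by blast
  then have 1: "B *v a \<in> vec.span (BR \<union> BAK)" using spanBR vec.span_mono[of BR "BR \<union> BAK"] by blast
  have "B *v k \<in> vec.span BAK" using ak K_BAK by blast
  then have 2: "B *v k \<in> vec.span (BR \<union> BAK)" using vec.span_mono[of BAK "BR \<union> BAK"] by blast
  show ?thesis using 1 2 ak by (simp add: matrix_vector_right_distrib vec.span_add)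
qed

lemma H_char:
  "Y \<in> H \<longleftrightarrow> (\<forall>j. (p j \<in> BR \<longrightarrow> Y *v p j = 0) \<and> (p j \<in> BAK \<longrightarrow> Y *v p j \<in> N)
      \<and> (p j \<in> BC \<longrightarrow> Y *v p j \<in> K))"
proof
  assume "Y \<in> H"
  then have h: "B ** Y ** B = 0" "Y ** T = 0" "T ** Y = 0" by (auto simp: H_def)
  show "\<forall>j. (p j \<in> BR \<longrightarrow> Y *v p j = 0) \<and> (p j \<in> BAK \<longrightarrow> Y *v p j \<in> N)
      \<and> (p j \<in> BC \<longrightarrow> Y *v p j \<in> K)"
  proof (intro allI conjI impI)
    fix j
    assume "p j \<in> BR"
    then obtain w where "p j = T *v w" using BR_R by (auto simp: R_def)
    then show "Y *v p j = 0" using h by (simp add: matrix_vector_mul_assoc mat0_iff)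
  next
    fix j
    assume "p j \<in> BAK"
    then obtain u where "p j = B *v u" using BAK_K by blast
    then have "B *v (Y *v p j) = (B ** Y ** B) *v u" by (simp add: matrix_vector_mul_assoc matrix_mul_assoc)
    then show "Y *v p j \<in> N" using h by (simp add: N_def)
  next
    fix j
    have "T *v (Y *v p j) = (T ** Y) *v p j" by (simp add: matrix_vector_mul_assoc)
    then show "Y *v p j \<in> K" using h by (simp add: K_def)
  qed
next
  assume h: "\<forall>j. (p j \<in> BR \<longrightarrow> Y *v p j = 0) \<and> (p j \<in> BAK \<longrightarrow> Y *v p j \<in> N)
      \<and> (p j \<in> BC \<longrightarrow> Y *v p j \<in> K)"
  have hb: "\<And>b. b \<in> BR \<Longrightarrow> Y *v b = 0" "\<And>b. b \<in> BAK \<Longrightarrow> Y *v b \<in> N"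
    "\<And>b. b \<in> BC \<Longrightarrow> Y *v b \<in> K"
    using h p_range by (metis UnCI imageE)+
  have z0: "(0::'a^'n) \<in> N" "(0::'a^'n) \<in> K" by (simp_all add: N_def K_def)
  have V1: "vec.span (BR \<union> BAK) \<subseteq> {z. (B ** Y) *v z = 0}"
  proof (rule vec.span_minimal)
    show "BR \<union> BAK \<subseteq> {z. (B ** Y) *v z = 0}"
      using hb z0 by (auto simp: N_def matrix_vector_mul_assoc[symmetric])
  qed (rule vec.subspace_kernel)
  have 1: "B ** Y ** B = 0"
    unfolding mat0_iff using V1 imB by (auto simp: matrix_vector_mul_assoc[symmetric])
  have V2: "vec.span BR \<subseteq> {z. Y *v z = 0}"
    by (rule vec.span_minimal) (use hb in \<open>auto intro: vec.subspace_kernel\<close>)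
  have 2: "Y ** T = 0"
    unfolding mat0_iff using V2 spanBR by (auto simp: R_def matrix_vector_mul_assoc[symmetric])
  have V3: "vec.span (range p) \<subseteq> {z. (T ** Y) *v z = 0}"
  proof (rule vec.span_minimal)
    show "range p \<subseteq> {z. (T ** Y) *v z = 0}"
      using hb z0 NK p_range by (auto simp: K_def matrix_vector_mul_assoc[symmetric])
  qed (rule vec.subspace_kernel)
  have 3: "T ** Y = 0" unfolding mat0_iff using V3 span_p by auto
  show "Y \<in> H" using 1 2 3 by (simp add: H_def)
qed

end

context fitb begin

lemma q_img: "q ` {i. q i \<in> S} = S" if "S \<subseteq> range q" for S
  using that by auto

lemma cod_span: "S \<subseteq> range q \<Longrightarrow> w \<in> vec.span S \<longleftrightarrow> (\<forall>i. q i \<notin> S \<longrightarrow> (Qinv *v w) $ i = 0)"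
  using colmat_span[OF Qinv, of w "{i. q i \<in> S}"] q_img by simp

lemma cod_N: "w \<in> N \<longleftrightarrow> (\<forall>i. q i \<notin> BN \<longrightarrow> (Qinv *v w) $ i = 0)"
  using cod_span[OF BN_q] spanBN by simp
lemma cod_K: "w \<in> K \<longleftrightarrow> (\<forall>i. q i \<notin> BK \<longrightarrow> (Qinv *v w) $ i = 0)"
  using cod_span[OF BK_q] spanBK by simp
lemma cod_0: "w = 0 \<longleftrightarrow> (\<forall>i. (Qinv *v w) $ i = 0)"
proof
  assume "\<forall>i. (Qinv *v w) $ i = 0"
  then have "Qinv *v w = 0" by (simp add: vec_eq_iff)
  then have "colmat q *v (Qinv *v w) = 0" by simp
  then show "w = 0" using Qinv by (simp add: matrix_vector_mul_assoc)
qed simp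

definition "Phi Y = Qinv ** Y ** colmat p"
definition "Psi M = colmat q ** M ** Pinv"
definition "Sset = {(i,j). (p j \<in> BAK \<and> q i \<in> BN) \<or> (p j \<in> BC \<and> q i \<in> BK)}"
definition "Zset = {M::'a^'n^'n. \<forall>i j. (i,j) \<notin> Sset \<longrightarrow> M $ i $ j = 0}"

lemma Phi_entry: "Phi Y $ i $ j = (Qinv *v (Y *v p j)) $ i"
  unfolding Phi_def entry_mv by (simp add: matrix_vector_mul_assoc[symmetric] colmat_axis)

lemma H_Phi: "Y \<in> H \<longleftrightarrow> Phi Y \<in> Zset"
proof -
  have per: "((p j \<in> BR \<longrightarrow> Y *v p j = 0) \<and> (p j \<in> BAK \<longrightarrow> Y *v p j \<in> N)
      \<and> (p j \<in> BC \<longrightarrow> Y *v p j \<in> K)) \<longleftrightarrow> (\<forall>i. (i,j) \<notin> Sset \<longrightarrow> Phi Y $ i $ j = 0)" for j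
  proof -
    consider "p j \<in> BR" "p j \<notin> BAK" "p j \<notin> BC" | "p j \<notin> BR" "p j \<in> BAK" "p j \<notin> BC"
      | "p j \<notin> BR" "p j \<notin> BAK" "p j \<in> BC"
      using pj_cases dis1 dis2 dis3 by blast
    then show ?thesis
    proof cases
      case 1
      then show ?thesis using cod_0[of "Y *v p j"] by (simp add: Sset_def Phi_entry)
    next
      case 2
      then show ?thesis using cod_N[of "Y *v p j"] by (simp add: Sset_def Phi_entry)
    next
      case 3
      then show ?thesis using cod_K[of "Y *v p j"] by (simp add: Sset_def Phi_entry)
    qed
  qed
  show ?thesis unfolding H_char Zset_def using per by blast
qed

lemma Psi_Phi: "Psi (Phi Y) = Y"
proof -
  have "Psi (Phi Y) = (colmat q ** Qinv) ** Y ** (colmat p ** Pinv)"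
    unfolding Psi_def Phi_def by (simp add: matrix_mul_assoc)
  then show ?thesis using Pinv Qinv by simp
qed
lemma Phi_Psi: "Phi (Psi M) = M"
proof -
  have "Phi (Psi M) = (Qinv ** colmat q) ** M ** (Pinv ** colmat p)"
    unfolding Psi_def Phi_def by (simp add: matrix_mul_assoc)
  then show ?thesis using Pinv Qinv by simp
qed

lemma bij_H_Z: "bij_betw Psi Zset H"
proof (rule bij_betw_byWitness[where f'=Phi])
  show "\<forall>a\<in>Zset. Phi (Psi a) = a" by (simp add: Phi_Psi)
  show "\<forall>a\<in>H. Psi (Phi a) = a" by (simp add: Psi_Phi)
  show "Psi ` Zset \<subseteq> H" using H_Phi Phi_Psi by auto
  show "Phi ` H \<subseteq> Zset" using H_Phi by auto
qed

lemma card_Sset: "card Sset = vec.dim N * vec.dim ((*v) B ` K) + vec.dim K * card BC"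
proof -
  have eq: "Sset = ({i. q i \<in> BN} \<times> {j. p j \<in> BAK}) \<union> ({i. q i \<in> BK} \<times> {j. p j \<in> BC})"
    by (auto simp: Sset_def)
  have disj: "({i. q i \<in> BN} \<times> {j. p j \<in> BAK}) \<inter> ({i. q i \<in> BK} \<times> {j. p j \<in> BC}) = {}"
    using dis3 by auto
  have c1: "card {i. q i \<in> BN} = card BN"
    using card_image[OF inj_on_subset[OF q_inj], of "{i. q i \<in> BN}"] q_img[OF BN_q] by simp
  have c2: "card {i. q i \<in> BK} = card BK"
    using card_image[OF inj_on_subset[OF q_inj], of "{i. q i \<in> BK}"] q_img[OF BK_q] by simp
  have pimg: "p ` {j. p j \<in> S} = S" if "S \<subseteq> BR \<union> BAK \<union> BC" for S
    using that p_range by auto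
  have "BAK \<subseteq> BR \<union> BAK \<union> BC" "BC \<subseteq> BR \<union> BAK \<union> BC" by blast+
  note pi = pimg[OF this(1)] pimg[OF this(2)]
  have c3: "card {j. p j \<in> BAK} = card BAK"
    using card_image[OF inj_on_subset[OF p_inj], of "{j. p j \<in> BAK}"] pi by simp
  have c4: "card {j. p j \<in> BC} = card BC"
    using card_image[OF inj_on_subset[OF p_inj], of "{j. p j \<in> BC}"] pi by simp
  show ?thesis
    unfolding eq using disj
    by (simp add: card_Un_disjoint card_cartesian_product c1 c2 c3 c4 cardBN cardBK cardBAK)
qed

end

context fitb begin

definition "s j = (if p j \<in> BR then (SOME u. u \<in> R \<and> B *v u = p j)
   else if p j \<in> BAK then (SOME u. u \<in> K \<and> B *v u = p j) else 0)"

lemma s_BR: "p j \<in> BR \<Longrightarrow> s j \<in> R \<and> B *v s j = p j"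
proof -
  assume h: "p j \<in> BR"
  then have "p j \<in> R" using BR_R by blast
  then have "p j \<in> (*v) B ` R" by (simp only: BR)
  then obtain u where "u \<in> R" "p j = B *v u" by (rule imageE)
  then have ex: "\<exists>u. u \<in> R \<and> B *v u = p j" by auto
  have "s j = (SOME u. u \<in> R \<and> B *v u = p j)" using h by (simp add: s_def)
  then show ?thesis using someI_ex[OF ex] by simp
qed

lemma s_BAK: "p j \<in> BAK \<Longrightarrow> s j \<in> K \<and> B *v s j = p j"
proof -
  assume h: "p j \<in> BAK"
  then have "p j \<notin> BR" using dis1 by blast
  have "p j \<in> (*v) B ` K" using h BAK_K by (rule subsetD[rotated])
  then obtain u where "u \<in> K" "p j = B *v u" by (rule imageE)
  then have ex: "\<exists>u. u \<in> K \<and> B *v u = p j" by auto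
  have "s j = (SOME u. u \<in> K \<and> B *v u = p j)" using h \<open>p j \<notin> BR\<close> by (simp add: s_def)
  then show ?thesis using someI_ex[OF ex] by simp
qed

lemma s_BC: "p j \<in> BC \<Longrightarrow> s j = 0"
proof -
  assume "p j \<in> BC"
  then have "p j \<notin> BR" "p j \<notin> BAK" using dis2 dis3 by blast+
  then show ?thesis by (simp add: s_def)
qed

definition "X0 = colmat s ** Pinv"

lemma X0_p: "X0 *v p j = s j"
proof -
  have "X0 *v p j = colmat s *v ((Pinv ** colmat p) *v axis j 1)"
    unfolding X0_def by (simp add: matrix_vector_mul_assoc[symmetric] colmat_axis)
  then show ?thesis using Pinv by (simp add: colmat_axis)
qed

lemma X0_b:
  "\<And>b. b \<in> BR \<Longrightarrow> X0 *v b \<in> R \<and> B *v (X0 *v b) = b"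
  "\<And>b. b \<in> BAK \<Longrightarrow> X0 *v b \<in> K \<and> B *v (X0 *v b) = b"
  "\<And>b. b \<in> BC \<Longrightarrow> X0 *v b = 0"
proof -
  fix b assume "b \<in> BR"
  then have "b \<in> range p" using p_range by simp
  then obtain j where "b = p j" by (rule rangeE)
  then show "X0 *v b \<in> R \<and> B *v (X0 *v b) = b" using s_BR X0_p \<open>b \<in> BR\<close> by simp
next
  fix b assume "b \<in> BAK"
  then have "b \<in> range p" using p_range by simp
  then obtain j where "b = p j" by (rule rangeE)
  then show "X0 *v b \<in> K \<and> B *v (X0 *v b) = b" using s_BAK X0_p \<open>b \<in> BAK\<close> by simp
next
  fix b assume "b \<in> BC"
  then have "b \<in> range p" using p_range by simp
  then obtain j where "b = p j" by (rule rangeE)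
  then show "X0 *v b = 0" using s_BC X0_p \<open>b \<in> BC\<close> by simp
qed

lemma X0_GD1: "B ** X0 ** B = B"
proof -
  have V: "vec.span (BR \<union> BAK) \<subseteq> {z. (B ** X0 - mat 1) *v z = 0}"
  proof (rule vec.span_minimal)
    show "BR \<union> BAK \<subseteq> {z. (B ** X0 - mat 1) *v z = 0}"
      using X0_b by (auto simp: matrix_vector_mult_diff_rdistrib matrix_vector_mul_assoc[symmetric])
  qed (rule vec.subspace_kernel)
  have "(B ** X0 ** B) *v v = B *v v" for v
  proof -
    have "(B ** X0 - mat 1) *v (B *v v) = 0" using V imB by blast
    then show ?thesis by (simp add: matrix_vector_mult_diff_rdistrib matrix_vector_mul_assoc[symmetric])
  qed
  then show ?thesis by (simp add: matrix_eq)
qed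

lemma X0_invR: "w \<in> R \<Longrightarrow> X0 *v (B *v w) = w"
proof -
  assume w: "w \<in> R"
  let ?V = "{z. X0 *v z \<in> R \<and> B *v (X0 *v z) = z}"
  have sub: "vec.subspace ?V"
    unfolding vec.subspace_def
  proof (intro conjI ballI allI)
    show "0 \<in> ?V" using subR vec.subspace_0 by auto
    fix x y assume "x \<in> ?V" "y \<in> ?V"
    then show "x + y \<in> ?V" using subR vec.subspace_add
      by (auto simp: matrix_vector_right_distrib)
  next
    fix c x assume "x \<in> ?V"
    then show "c *s x \<in> ?V" using subR vec.subspace_scale
      by (auto simp: vector_scalar_commute)
  qed
  have "vec.span BR \<subseteq> ?V" using X0_b(1) by (intro vec.span_minimal[OF _ sub]) auto
  moreover have "B *v w \<in> vec.span BR" using w BR spanBR by blast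
  ultimately have h: "X0 *v (B *v w) \<in> R" "B *v (X0 *v (B *v w)) = B *v w" by blast+
  show ?thesis using injR[OF h(1) w h(2)] .
qed

lemma X0_GD2: "X0 ** T = T ** X0"
proof -
  have TB: "T *v (B *v x) = B *v (T *v x)" for x
    by (simp add: matrix_vector_mul_assoc matpow_comm)
  have V: "vec.span (range p) \<subseteq> {z. (X0 ** T - T ** X0) *v z = 0}"
  proof (rule vec.span_minimal)
    show "range p \<subseteq> {z. (X0 ** T - T ** X0) *v z = 0}"
    proof
      fix b assume "b \<in> range p"
      then have b: "b \<in> BR \<or> b \<in> BAK \<or> b \<in> BC" using p_range by simp
      have "X0 *v (T *v b) = T *v (X0 *v b)"
      proof (cases "b \<in> BR")
        case True
        then have h: "X0 *v b \<in> R" "B *v (X0 *v b) = b" using X0_b by auto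
        have "T *v b = B *v (T *v (X0 *v b))" using h TB by metis
        moreover have "T *v (X0 *v b) \<in> R" by (simp add: R_def)
        ultimately show ?thesis using X0_invR by simp
      next
        case False
        then have bK: "b \<in> K" using b BAK_KK BC_K by blast
        have "X0 *v b \<in> K"
        proof (cases "b \<in> BAK")
          case True
          then show ?thesis using X0_b(2) by blast
        next
          case False2: False
          then have "b \<in> BC" using False b by blast
          then show ?thesis using X0_b(3) by (simp add: K_def)
        qed
        then show ?thesis using bK by (simp add: K_def)
      qed
      then show "b \<in> {z. (X0 ** T - T ** X0) *v z = 0}"
        by (simp add: matrix_vector_mult_diff_rdistrib matrix_vector_mul_assoc[symmetric])
    qed
  qed (rule vec.subspace_kernel)
  then have "(X0 ** T - T ** X0) *v v = 0" for v using span_p by blast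
  then have "X0 ** T - T ** X0 = 0" by (simp add: mat0_iff)
  then show ?thesis by simp
qed

lemma X0_GD: "X0 \<in> GDB" using X0_GD1 X0_GD2 by (simp add: GDB_def)

lemma bij_Z_GD: "bij_betw (\<lambda>M. X0 + Psi M) Zset GDB"
proof -
  have "bij_betw (\<lambda>Y. X0 + Y) H GDB"
  proof (rule bij_betw_byWitness[where f'="\<lambda>X. X - X0"])
    show "(\<lambda>Y. X0 + Y) ` H \<subseteq> GDB" using GD_shift[OF X0_GD] by auto
    show "(\<lambda>X. X - X0) ` GDB \<subseteq> H" using GD_shift[OF X0_GD] by auto
  qed auto
  from bij_betw_trans[OF bij_H_Z this] show ?thesis by (simp add: o_def)
qed

end

lemma bij_triple:
  "bij_betw (\<lambda>(x,y,z). x @ y @ z) (kpow a \<times> kpow b \<times> kpow c) (kpow (a + b + c))"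
proof (rule bij_betw_byWitness[where f'="\<lambda>l. (take a l, take b (drop a l), drop (a + b) l)"])
  show "\<forall>t\<in>kpow a \<times> kpow b \<times> kpow c.
     (\<lambda>l. (take a l, take b (drop a l), drop (a + b) l)) ((\<lambda>(x, y, z). x @ y @ z) t) = t"
    by (auto simp: kpow_def)
  show "\<forall>l\<in>kpow (a + b + c). (\<lambda>(x, y, z). x @ y @ z) (take a l, take b (drop a l), drop (a + b) l) = l"
    by (auto simp: kpow_def) (metis append_take_drop_id drop_drop add.commute)
  show "(\<lambda>(x, y, z). x @ y @ z) ` (kpow a \<times> kpow b \<times> kpow c) \<subseteq> kpow (a + b + c)"
    by (auto simp: kpow_def)
  show "(\<lambda>l. (take a l, take b (drop a l), drop (a + b) l)) ` kpow (a + b + c) \<subseteq> kpow a \<times> kpow b \<times> kpow c"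
    by (auto simp: kpow_def)
qed

lemma bij_lists_Z:
  fixes S :: "('n::finite \<times> 'n) set"
  shows "\<exists>f. bij_betw f (kpow (card S) :: 'a list set) {M::'a::field^'n^'n. \<forall>i j. (i,j) \<notin> S \<longrightarrow> M $ i $ j = 0}"
proof -
  have fin: "finite S" by simp
  obtain g where g: "bij_betw g {0..<card S} S" using ex_bij_betw_nat_finite[OF fin] by blast
  define gi where "gi = inv_into {0..<card S} g"
  have gi: "bij_betw gi S {0..<card S}" unfolding gi_def by (rule bij_betw_inv_into[OF g])
  have gig: "\<And>k. k < card S \<Longrightarrow> gi (g k) = k"
    unfolding gi_def using g by (simp add: bij_betw_def inv_into_f_f)
  have ggi: "\<And>x. x \<in> S \<Longrightarrow> g (gi x) = x"
    unfolding gi_def using g by (simp add: bij_betw_def f_inv_into_f)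
  have gS: "\<And>k. k < card S \<Longrightarrow> g k \<in> S" using g by (auto simp: bij_betw_def)
  have giS: "\<And>x. x \<in> S \<Longrightarrow> gi x < card S" using gi by (auto simp: bij_betw_def)
  define f where "f xs = (\<chi> i j. if (i,j) \<in> S then xs ! gi (i,j) else (0::'a))" for xs
  define h where "h M = map (\<lambda>k. M $ fst (g k) $ snd (g k)) [0..<card S]" for M :: "'a^'n^'n"
  have "bij_betw f (kpow (card S)) {M::'a^'n^'n. \<forall>i j. (i,j) \<notin> S \<longrightarrow> M $ i $ j = 0}"
  proof (rule bij_betw_byWitness[where f'=h])
    show "\<forall>xs\<in>kpow (card S). h (f xs) = xs"
    proof
      fix xs :: "'a list" assume "xs \<in> kpow (card S)"
      then have l: "length xs = card S" by (simp add: kpow_def)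
      show "h (f xs) = xs"
      proof (rule nth_equalityI)
        show "length (h (f xs)) = length xs" using l by (simp add: h_def)
        fix k assume "k < length (h (f xs))"
        then have k: "k < card S" by (simp add: h_def)
        have "h (f xs) ! k = f xs $ fst (g k) $ snd (g k)" using k by (simp add: h_def)
        also have "\<dots> = xs ! gi (g k)" using gS[OF k] by (simp add: f_def)
        also have "\<dots> = xs ! k" using gig[OF k] by simp
        finally show "h (f xs) ! k = xs ! k" .
      qed
    qed
    show "\<forall>M\<in>{M::'a^'n^'n. \<forall>i j. (i,j) \<notin> S \<longrightarrow> M $ i $ j = 0}. f (h M) = M"
    proof
      fix M :: "'a^'n^'n" assume M: "M \<in> {M. \<forall>i j. (i,j) \<notin> S \<longrightarrow> M $ i $ j = 0}"
      have "f (h M) $ i $ j = M $ i $ j" for i j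
      proof (cases "(i,j) \<in> S")
        case True
        then have "f (h M) $ i $ j = h M ! gi (i,j)" by (simp add: f_def)
        also have "\<dots> = M $ fst (g (gi (i,j))) $ snd (g (gi (i,j)))"
          using giS[OF True] by (simp add: h_def)
        also have "\<dots> = M $ i $ j" using ggi[OF True] by simp
        finally show ?thesis .
      next
        case False
        then show ?thesis using M by (simp add: f_def)
      qed
      then show "f (h M) = M" by (simp add: vec_eq_iff)
    qed
    show "f ` kpow (card S) \<subseteq> {M::'a^'n^'n. \<forall>i j. (i,j) \<notin> S \<longrightarrow> M $ i $ j = 0}"
      by (auto simp: f_def)
    show "h ` {M::'a^'n^'n. \<forall>i j. (i,j) \<notin> S \<longrightarrow> M $ i $ j = 0} \<subseteq> kpow (card S)"
      by (auto simp: h_def kpow_def)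
  qed
  then show ?thesis by blast
qed

context fit begin

lemma exists_fitb: "\<exists>p q BR BAK BC BN BK'. fitb B r p q BR BAK BC BN BK'"
proof -
  obtain BR where BR1: "BR \<subseteq> R" "vec.independent BR" "R \<subseteq> vec.span BR"
    by (rule vec.maximal_independent_subset)
  define AK where "AK = (*v) B ` K"
  have AKK: "AK \<subseteq> K" unfolding AK_def by (rule BK)
  obtain BAK where BAK1: "BAK \<subseteq> AK" "vec.independent BAK" "AK \<subseteq> vec.span BAK"
    by (rule vec.maximal_independent_subset)
  have "BAK \<subseteq> K" using BAK1(1) AKK by (rule order_trans)
  obtain BKK where BKK1: "BAK \<subseteq> BKK" "BKK \<subseteq> K" "vec.independent BKK" "K \<subseteq> vec.span BKK"
    by (rule vec.maximal_independent_subset_extend[OF \<open>BAK \<subseteq> K\<close> BAK1(2)])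
  define BC where "BC = BKK - BAK"
  obtain BN where BN1: "BN \<subseteq> N" "vec.independent BN" "N \<subseteq> vec.span BN"
    by (rule vec.maximal_independent_subset)
  have "BN \<subseteq> K" using BN1(1) NK by (rule order_trans)
  obtain BKq where BKq1: "BN \<subseteq> BKq" "BKq \<subseteq> K" "vec.independent BKq" "K \<subseteq> vec.span BKq"
    by (rule vec.maximal_independent_subset_extend[OF \<open>BN \<subseteq> K\<close> BN1(2)])
  obtain BQ where BQ1: "BKq \<subseteq> BQ" "BQ \<subseteq> UNIV" "vec.independent BQ" "UNIV \<subseteq> vec.span BQ"
    by (rule vec.maximal_independent_subset_extend[OF subset_UNIV BKq1(3)])
  have finQ: "finite BQ" using BQ1 vec.finiteI_independent by blast
  have cardQ: "card BQ = CARD('n)"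
    using vec.basis_card_eq_dim[of BQ UNIV] BQ1 by (simp add: vec_dim_card card_cart_basis)
  have "\<exists>h. bij_betw h (UNIV::'n set) BQ"
    by (rule finite_same_card_bij) (simp_all add: finQ cardQ)
  then obtain q where q: "bij_betw q (UNIV::'n set) BQ" by (elim exE)
  define U where "U = BR \<union> BKK"
  have finBR: "finite BR" using BR1 vec.finiteI_independent by blast
  have finBKK: "finite BKK" using BKK1 vec.finiteI_independent by blast
  have disj: "BR \<inter> BKK = {}"
  proof (rule ccontr)
    assume "BR \<inter> BKK \<noteq> {}"
    then obtain x where x: "x \<in> BR" "x \<in> BKK" by blast
    then have "x \<in> R \<inter> K" using BR1 BKK1 by blast
    then have "x = 0" using RK0 by blast
    then have "0 \<in> BR" using x by simp
    then show False using BR1(2) vec.dependent_zero by blast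
  qed
  have cBR: "card BR = vec.dim R" using vec.basis_card_eq_dim BR1 by blast
  have cBKK: "card BKK = vec.dim K" using vec.basis_card_eq_dim BKK1 by blast
  have cU: "card U = CARD('n)"
    unfolding U_def using card_Un_disjoint[OF finBR finBKK disj] cBR cBKK dimRK by simp
  have finU: "finite U" using finBR finBKK U_def by simp
  have spU: "UNIV \<subseteq> vec.span U"
  proof
    fix v :: "'a^'n"
    obtain a k where ak: "a \<in> R" "k \<in> K" "v = a + k" using RplusK by blast
    have "a \<in> vec.span U" using ak BR1 vec.span_mono[of BR U] U_def by auto
    moreover have "k \<in> vec.span U" using ak BKK1 vec.span_mono[of BKK U] U_def by auto
    ultimately show "v \<in> vec.span U" using ak vec.span_add by simp
  qed
  have indU: "vec.independent U"
    using vec.card_le_dim_spanning[of U UNIV] spU finU cU by (simp add: vec_dim_card card_cart_basis)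
  have Ueq: "U = BR \<union> BAK \<union> BC" using BKK1 U_def BC_def by auto
  have "\<exists>h. bij_betw h (UNIV::'n set) U"
    by (rule finite_same_card_bij) (simp_all add: finU cU)
  then obtain p where p: "bij_betw p (UNIV::'n set) U" by (elim exE)
  have cBAK: "card BAK = vec.dim AK" using vec.basis_card_eq_dim BAK1 by blast
  have cBC: "card BAK + card BC = vec.dim K"
    using cBKK BKK1(1) finBKK unfolding BC_def
    by (metis card_Diff_subset card_mono finite_subset le_add_diff_inverse)
  have "fitb B r p q BR BAK BC BN BKq"
  proof (unfold_locales)
    show "bij_betw p UNIV (BR \<union> BAK \<union> BC)" using p Ueq by simp
    show "vec.independent (BR \<union> BAK \<union> BC)" using indU Ueq by simp
    show "BR \<inter> BAK = {}" using disj BKK1 by blast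
    show "BR \<inter> BC = {}" using disj BC_def by blast
    show "BAK \<inter> BC = {}" using BC_def by blast
    show "BR \<subseteq> R" "R \<subseteq> vec.span BR" using BR1 by auto
    show "BAK \<subseteq> (*v) B ` K" using BAK1(1) by (simp add: AK_def)
    show "(*v) B ` K \<subseteq> vec.span BAK" using BAK1(3) by (simp add: AK_def)
    show "BC \<subseteq> K" using BKK1 BC_def by blast
    show "card BAK = vec.dim ((*v) B ` K)" using cBAK AK_def by simp
    show "card BAK + card BC = vec.dim K" by (rule cBC)
    show "inj q" using q by (simp add: bij_betw_def)
    show "vec.independent (range q)" using q BQ1 by (simp add: bij_betw_def)
    show "BN \<subseteq> range q" using q BQ1 BKq1 by (auto simp: bij_betw_def)
    show "BKq \<subseteq> range q" using q BQ1 by (auto simp: bij_betw_def)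
    show "BN \<subseteq> N" "N \<subseteq> vec.span BN" using BN1 by auto
    show "BKq \<subseteq> K" "K \<subseteq> vec.span BKq" using BKq1 by auto
    show "card BN = vec.dim N" using vec.basis_card_eq_dim BN1 by blast
    show "card BKq = vec.dim K" using vec.basis_card_eq_dim BKq1 by blast
  qed
  then show ?thesis by (intro exI)
qed

lemma main_fit:
  assumes dN: "vec.dim N \<ge> 1"
  shows "\<exists>f. bij_betw f ((kpow (vec.dim N * vec.dim K) :: 'a list set) \<times> (kpow (vec.dim K - vec.dim N) :: 'a list set)
        \<times> (kpow ((vec.dim N - 1) * (vec.dim K - vec.dim N)) :: 'a list set)) GDB"
proof -
  obtain p q BR BAK BC BN BK' where "fitb B r p q BR BAK BC BN BK'" using exists_fitb by (elim exE)
  then interpret fb: fitb B r p q BR BAK BC BN BK' .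
  have dAK: "vec.dim ((*v) B ` K) = vec.dim K - vec.dim N" using dimBK by simp
  have le: "vec.dim N \<le> vec.dim K" using dimBK by simp
  have cBC: "card BC = vec.dim N" using fb.cardBC fb.cardBAK dimBK by simp
  have cS: "card fb.Sset = vec.dim N * (vec.dim K - vec.dim N) + vec.dim K * vec.dim N"
    using fb.card_Sset dAK cBC by simp
  obtain m where m: "vec.dim N = Suc m" using dN by (cases "vec.dim N") auto
  have len: "vec.dim N * vec.dim K + (vec.dim K - vec.dim N) + (vec.dim N - 1) * (vec.dim K - vec.dim N)
      = card fb.Sset"
  proof -
    obtain x where x: "vec.dim K = vec.dim N + x" using le le_Suc_ex by blast
    show ?thesis unfolding cS x m by (simp add: algebra_simps)
  qed
  obtain g where g: "bij_betw g (kpow (card fb.Sset) :: 'a list set) fb.Zset"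
    using bij_lists_Z[of fb.Sset] unfolding fb.Zset_def by blast
  have t: "bij_betw (\<lambda>(x,y,z). x @ y @ z)
     ((kpow (vec.dim N * vec.dim K) :: 'a list set) \<times> (kpow (vec.dim K - vec.dim N) :: 'a list set)
        \<times> (kpow ((vec.dim N - 1) * (vec.dim K - vec.dim N)) :: 'a list set)) (kpow (card fb.Sset))"
    using bij_triple[of "vec.dim N * vec.dim K" "vec.dim K - vec.dim N"
        "(vec.dim N - 1) * (vec.dim K - vec.dim N)"] len by simp
  have F: "bij_betw ((\<lambda>M. fb.X0 + fb.Psi M) \<circ> g \<circ> (\<lambda>(x,y,z). x @ y @ z))
     ((kpow (vec.dim N * vec.dim K) :: 'a list set) \<times> (kpow (vec.dim K - vec.dim N) :: 'a list set)
        \<times> (kpow ((vec.dim N - 1) * (vec.dim K - vec.dim N)) :: 'a list set)) GDB"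
    by (rule bij_betw_trans[OF t bij_betw_trans[OF g fb.bij_Z_GD]])
  show ?thesis by (rule exI, rule F)
qed

end

lemma rank_pow_B: "rank (matpow (A::'a::field^'n^'n) i) = vec.dim (range ((*v) (matpow (transpose A) i)))"
  by (simp add: rank_cr transpose_matpow)

lemma exists_stable:
  fixes A :: "'a::field^'n^'n"
  shows "\<exists>m. rank (matpow A m) = rank (matpow A (Suc m))"
proof (rule ccontr)
  assume "\<not> ?thesis"
  then have ne: "\<And>m. rank (matpow A m) \<noteq> rank (matpow A (Suc m))" by blast
  define d where "d m = rank (matpow A m)" for m
  have mono: "d (Suc m) \<le> d m" for m
  proof -
    have "range ((*v) (matpow (transpose A) (Suc m))) \<subseteq> range ((*v) (matpow (transpose A) m))"
    proof
      fix y assume "y \<in> range ((*v) (matpow (transpose A) (Suc m)))"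
      then obtain x where x: "y = matpow (transpose A) (Suc m) *v x" by (rule rangeE)
      have "y = matpow (transpose A) m *v (transpose A *v x)"
        unfolding x matpow_Suc' by (simp only: matrix_vector_mul_assoc)
      then show "y \<in> range ((*v) (matpow (transpose A) m))" by (rule range_eqI)
    qed
    then show ?thesis unfolding d_def rank_pow_B by (rule vec.dim_subset)
  qed
  have lt: "d (Suc m) < d m" for m using mono[of m] ne[of m] unfolding d_def by simp
  have "d m + m \<le> d 0" for m
  proof (induction m)
    case (Suc m)
    then show ?case using lt[of m] by simp
  qed simp
  from this[of "Suc (d 0)"] show False by simp
qed

lemma transpose_inj: "transpose X = transpose Y \<Longrightarrow> X = Y"
  by (metis transpose_transpose)

theorem mainTheorem12:
  fixes A :: "'a::field^'n^'n"
  assumes "mat_index A = r" and "r \<ge> 1"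
  shows "\<exists>f :: 'a list \<times> 'a list \<times> 'a list \<Rightarrow> 'a^'n^'n. bij_betw f
     (kpow (nu 1 A * nu r A) \<times> kpow (nu r A - nu 1 A)
        \<times> kpow ((nu 1 A - 1) * (nu r A - nu 1 A)))
     (GD_inverses A)"
proof -
  define B where "B = transpose A"
  have rk: "\<And>i. rank (matpow A i) = vec.dim (range ((*v) (matpow B i)))"
    using rank_pow_B B_def by simp
  have eqr: "rank (matpow A r) = rank (matpow A (Suc r))"
    using assms(1) LeastI_ex[OF exists_stable[of A]] unfolding mat_index_def by simp
  have r0: "0 < (LEAST r. rank (matpow A r) = rank (matpow A (Suc r)))"
    using assms unfolding mat_index_def by simp
  have n0: "rank (matpow A 0) \<noteq> rank (matpow A (Suc 0))"
    using not_less_Least[OF r0] .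
  interpret fit B r
  proof
    show "1 \<le> r" by (rule assms(2))
    show "vec.dim (range ((*v) (matpow B r))) = vec.dim (range ((*v) (matpow B (Suc r))))"
      using eqr by (simp only: rk)
  qed
  have B1: "matpow B (Suc 0) = B" by simp
  have rk0: "rank (matpow A 0) = CARD('n)"
    using rk[of 0] by (simp add: vec_dim_card card_cart_basis)
  have dimB: "vec.dim (range ((*v) B)) + vec.dim N = CARD('n)"
    using rank_nullity[OF vec.subspace_UNIV, of B] by (simp add: N_def vec_dim_card card_cart_basis)
  have nu1: "nu 1 A = vec.dim N"
    unfolding nu_def using rk[of 1] dimB by simp
  have nur: "nu r A = vec.dim K"
    unfolding nu_def using rk[of r] dimRK by (simp add: R_def)
  have dN: "vec.dim N \<ge> 1"
  proof (rule ccontr)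
    assume "\<not> vec.dim N \<ge> 1"
    then have d0: "vec.dim N = 0" by linarith
    have "rank (matpow A (Suc 0)) = vec.dim (range ((*v) B))" using rk[of "Suc 0"] B1 by simp
    then have "rank (matpow A (Suc 0)) = CARD('n)" using dimB d0 by linarith
    then show False using n0 rk0 by simp
  qed
  obtain f where f: "bij_betw f ((kpow (vec.dim N * vec.dim K) :: 'a list set)
      \<times> (kpow (vec.dim K - vec.dim N) :: 'a list set)
        \<times> (kpow ((vec.dim N - 1) * (vec.dim K - vec.dim N)) :: 'a list set)) GDB"
    using main_fit[OF dN] by (elim exE)
  have tr: "bij_betw transpose GDB (GD_inverses A)"
  proof (rule bij_betw_byWitness[where f'=transpose])
    show "\<forall>a\<in>GDB. transpose (transpose a) = a" by simp
    show "\<forall>a\<in>GD_inverses A. transpose (transpose a) = a" by simp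
    show "transpose ` GDB \<subseteq> GD_inverses A"
    proof
      fix X assume "X \<in> transpose ` GDB"
      then obtain Y where Y: "Y \<in> GDB" "X = transpose Y" by (rule imageE)
      have 1: "B ** Y ** B = B" "Y ** T = T ** Y" using Y by (auto simp: GDB_def)
      have "transpose (A ** X ** A) = transpose A"
        using 1 Y B_def by (simp add: matrix_transpose_mul matrix_mul_assoc)
      then have a: "A ** X ** A = A" by (rule transpose_inj)
      have "transpose (X ** matpow A r) = transpose (matpow A r ** X)"
        using 1 Y B_def by (simp add: matrix_transpose_mul transpose_matpow)
      then have b: "X ** matpow A r = matpow A r ** X" by (rule transpose_inj)
      show "X \<in> GD_inverses A" using a b assms(1) by (simp add: GD_inverses_def)
    qed
    show "transpose ` GD_inverses A \<subseteq> GDB"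
    proof
      fix Y assume "Y \<in> transpose ` GD_inverses A"
      then obtain X where X: "X \<in> GD_inverses A" "Y = transpose X" by (rule imageE)
      have 1: "A ** X ** A = A" "X ** matpow A r = matpow A r ** X"
        using X assms(1) by (auto simp: GD_inverses_def)
      have a: "B ** Y ** B = B"
        using arg_cong[OF 1(1), of transpose] X B_def
        by (simp add: matrix_transpose_mul matrix_mul_assoc)
      have b: "Y ** T = T ** Y"
        using arg_cong[OF 1(2), of transpose] X B_def
        by (simp add: matrix_transpose_mul transpose_matpow)
      show "Y \<in> GDB" using a b by (simp add: GDB_def)
    qed
  qed
  have F: "bij_betw (transpose \<circ> f) ((kpow (vec.dim N * vec.dim K) :: 'a list set)
      \<times> (kpow (vec.dim K - vec.dim N) :: 'a list set)
        \<times> (kpow ((vec.dim N - 1) * (vec.dim K - vec.dim N)) :: 'a list set)) (GD_inverses A)"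
    by (rule bij_betw_trans[OF f tr])
  show ?thesis unfolding nu1 nur by (rule exI, rule F)
qed

end
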